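(* Let $(\mathcal{G},\mu)$ be an edge partition, $B\subseteq\mathcal{N}$, $\zeta\in\Theta_\mathcal{G}(B)$, $e\in\zeta\cap\mathcal{E}^-$ and $e'\in\mu(e)$. Then $(\zeta\setminus\{e\})\cup\{e'\}\in\Theta_\mathcal{G}(B)$.
   Context: $R$ is a partially ordered ring; $\mathcal{G}=(\mathcal{N},\mathcal{E})$ is a multidigraph with source/target maps $s,t\colon\mathcal{E}\to\mathcal{N}$, no self-loops, $\mathcal{N}=\{1,\dots,m+1\}$, labeling $\pi\colon\mathcal{E}\to R$. Trees/forests are subgraphs whose underlying undirected graph is acyclic (connected for trees); a tree is rooted at $N$ if $N$ is its only node without outgoing edges; spanning forests have node set $\mathcal{N}$ and are identified with their edge sets. $\Theta_\mathcal{G}(B)$ is the set of spanning forests with $|B|$ connected components, each a tree rooted at a node of $B$. A cycle is a closed directed path with no repeated nodes. $\mathcal{E}^-=\{e:\pi(e)\in R_{<0}\}$, $\mathcal{E}^+=\{e:\pi(e)\in R_{>0}\}$. A pair $(\mathcal{G},\mu)$ with $\mu\colon\mathcal{E}^-\to\mathcal{P}(\mathcal{E}^+)$ is an edge partition if (i) $\mathcal{E}=\mathcal{E}^+\sqcup\mathcal{E}^-$; (ii) every cycle contains at most one edge of $\mathcal{E}^-$; (iii) for each $e\in\mathcal{E}^-$: (a) $e'\in\mu(e)\Rightarrow s(e')=s(e)$; (b) $e'\in\mu(e)\Rightarrow$ every cycle containing $e'$ contains $t(e)$; (c) $\mu(e)\cap\mu(e')=\emptyset$ for $e\neq e'$.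 *)

theory Defs
  imports Main
begin

definition multidigraph :: "nat \<Rightarrow> 'e set \<Rightarrow> ('e \<Rightarrow> nat) \<Rightarrow> ('e \<Rightarrow> nat) \<Rightarrow> bool" where
  "multidigraph m E s t \<longleftrightarrow> finite E \<and>
     (\<forall>e\<in>E. s e \<in> {1..m+1} \<and> t e \<in> {1..m+1} \<and> s e \<noteq> t e)"

definition ucycle :: "('e \<Rightarrow> nat) \<Rightarrow> ('e \<Rightarrow> nat) \<Rightarrow> 'e set \<Rightarrow> 'e list \<Rightarrow> nat list \<Rightarrow> bool" where
  "ucycle s t F es vs \<longleftrightarrow> es \<noteq> [] \<and> length vs = length es \<and> distinct es \<and> distinct vs \<and>
     set es \<subseteq> F \<and>
     (\<forall>i<length es. (s (es!i) = vs!i \<and> t (es!i) = vs!((i+1) mod length es)) \<or>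
                    (t (es!i) = vs!i \<and> s (es!i) = vs!((i+1) mod length es)))"

definition uacyclic :: "('e \<Rightarrow> nat) \<Rightarrow> ('e \<Rightarrow> nat) \<Rightarrow> 'e set \<Rightarrow> bool" where
  "uacyclic s t F \<longleftrightarrow> (\<nexists>es vs. ucycle s t F es vs)"

definition uconn :: "nat set \<Rightarrow> ('e \<Rightarrow> nat) \<Rightarrow> ('e \<Rightarrow> nat) \<Rightarrow> 'e set \<Rightarrow> (nat \<times> nat) set" where
  "uconn N s t F = Restr ((({(s e, t e) | e. e \<in> F}) \<union> {(t e, s e) | e. e \<in> F})\<^sup>*) N"

definition components :: "nat set \<Rightarrow> ('e \<Rightarrow> nat) \<Rightarrow> ('e \<Rightarrow> nat) \<Rightarrow> 'e set \<Rightarrow> nat set set" where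
  "components N s t F = N // uconn N s t F"

text \<open>Theta_G(B): spanning forests (edge sets F \<subseteq> E, node set N) with |B| connected
  components, each a tree rooted at a node of B (its unique node without outgoing F-edges
  lies in B).\<close>
definition Theta :: "nat \<Rightarrow> 'e set \<Rightarrow> ('e \<Rightarrow> nat) \<Rightarrow> ('e \<Rightarrow> nat) \<Rightarrow> nat set \<Rightarrow> 'e set set" where
  "Theta m E s t B = {F. F \<subseteq> E \<and> uacyclic s t F \<and>
      card (components {1..m+1} s t F) = card B \<and>
      (\<forall>C\<in>components {1..m+1} s t F. \<exists>r\<in>B \<inter> C.
          \<forall>n\<in>C. (\<nexists>e. e \<in> F \<and> s e = n) \<longleftrightarrow> n = r)}"

definition dcycle :: "'e set \<Rightarrow> ('e \<Rightarrow> nat) \<Rightarrow> ('e \<Rightarrow> nat) \<Rightarrow> 'e list \<Rightarrow> bool" where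
  "dcycle E s t es \<longleftrightarrow> es \<noteq> [] \<and> set es \<subseteq> E \<and> distinct (map s es) \<and>
     (\<forall>i<length es. t (es!i) = s (es!((i+1) mod length es)))"

definition Eneg :: "'e set \<Rightarrow> ('e \<Rightarrow> 'r::ordered_ring) \<Rightarrow> 'e set" where
  "Eneg E \<pi> = {e\<in>E. \<pi> e < 0}"

definition Epos :: "'e set \<Rightarrow> ('e \<Rightarrow> 'r::ordered_ring) \<Rightarrow> 'e set" where
  "Epos E \<pi> = {e\<in>E. \<pi> e > 0}"

definition edge_partition ::
  "nat \<Rightarrow> 'e set \<Rightarrow> ('e \<Rightarrow> nat) \<Rightarrow> ('e \<Rightarrow> nat) \<Rightarrow> ('e \<Rightarrow> 'r::ordered_ring) \<Rightarrow> ('e \<Rightarrow> 'e set) \<Rightarrow> bool" where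
  "edge_partition m E s t \<pi> \<mu> \<longleftrightarrow>
     multidigraph m E s t \<and>
     E = Epos E \<pi> \<union> Eneg E \<pi> \<and> Epos E \<pi> \<inter> Eneg E \<pi> = {} \<and>
     (\<forall>es. dcycle E s t es \<longrightarrow> card (set es \<inter> Eneg E \<pi>) \<le> 1) \<and>
     (\<forall>e\<in>Eneg E \<pi>. \<mu> e \<subseteq> Epos E \<pi> \<and>
        (\<forall>e'\<in>\<mu> e. s e' = s e) \<and>
        (\<forall>e'\<in>\<mu> e. \<forall>es. dcycle E s t es \<and> e' \<in> set es \<longrightarrow> t e \<in> s ` set es) \<and>
        (\<forall>e''\<in>Eneg E \<pi>. e'' \<noteq> e \<longrightarrow> \<mu> e \<inter> \<mu> e'' = {}))"

end

theory Submission
  imports Defs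
begin

definition urel :: "('e \<Rightarrow> nat) \<Rightarrow> ('e \<Rightarrow> nat) \<Rightarrow> 'e set \<Rightarrow> (nat \<times> nat) set" where
  "urel s t F = {(s e, t e) | e. e \<in> F} \<union> {(t e, s e) | e. e \<in> F}"

lemma uconn_urel: "uconn N s t F = Restr ((urel s t F)\<^sup>*) N"
  by (simp add: uconn_def urel_def)

definition trapfree :: "('e \<Rightarrow> nat) \<Rightarrow> ('e \<Rightarrow> nat) \<Rightarrow> 'e set \<Rightarrow> bool" where
  "trapfree s t F \<longleftrightarrow> \<not>(\<exists>S. S \<noteq> {} \<and> (\<forall>x\<in>S. \<exists>f\<in>F. s f = x \<and> t f \<in> S))"

definition uwalk :: "('e \<Rightarrow> nat) \<Rightarrow> ('e \<Rightarrow> nat) \<Rightarrow> 'e set \<Rightarrow> 'e list \<Rightarrow> nat list \<Rightarrow> bool" where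
  "uwalk s t F ps ws \<longleftrightarrow> length ws = Suc (length ps) \<and> set ps \<subseteq> F \<and>
    (\<forall>i<length ps. (s (ps!i) = ws!i \<and> t (ps!i) = ws!Suc i) \<or> (t (ps!i) = ws!i \<and> s (ps!i) = ws!Suc i))"

lemma sym_urel: "sym (urel s t F)" unfolding urel_def sym_def by blast

lemma uconn_equiv: "equiv N (uconn N s t F)"
proof (rule equivI)
  show "uconn N s t F \<subseteq> N \<times> N" unfolding uconn_urel by auto
  show "refl_on N (uconn N s t F)" unfolding uconn_urel refl_on_def by auto
  show "sym (uconn N s t F)"
    using sym_rtrancl[OF sym_urel, of s t F] unfolding uconn_urel sym_def by blast
  show "trans (uconn N s t F)" unfolding uconn_urel
    by (rule trans_Restr) (rule trans_rtrancl)
qed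

lemma uconn_sym: "(x,y) \<in> uconn N s t F \<Longrightarrow> (y,x) \<in> uconn N s t F"
  using uconn_equiv[of N s t F] unfolding equiv_def by (meson symD)

lemma uconn_trans: "(x,y) \<in> uconn N s t F \<Longrightarrow> (y,z) \<in> uconn N s t F \<Longrightarrow> (x,z) \<in> uconn N s t F"
  using uconn_equiv[of N s t F] unfolding equiv_def by (meson transD)

lemma edge_uconn:
  assumes "f \<in> F" "s f \<in> N" "t f \<in> N"
  shows "(s f, t f) \<in> uconn N s t F" "(t f, s f) \<in> uconn N s t F"
  using assms unfolding uconn_urel urel_def by auto

lemma uconn_mono: "F0 \<subseteq> F \<Longrightarrow> uconn N s t F0 \<subseteq> uconn N s t F"
  unfolding uconn_urel urel_def
  by (rule Int_mono[OF rtrancl_mono order_refl]) blast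

lemma walk_exists:
  assumes "(u,v) \<in> (urel s t F)\<^sup>*"
  shows "\<exists>ps ws. uwalk s t F ps ws \<and> distinct ws \<and> hd ws = u \<and> last ws = v"
  using assms
proof (induction rule: rtrancl_induct)
  case base
  show ?case by (rule exI[of _ "[]"], rule exI[of _ "[u]"]) (simp add: uwalk_def)
next
  case (step y z)
  then obtain ps ws where W: "uwalk s t F ps ws" "distinct ws" "hd ws = u" "last ws = y" by blast
  from step.hyps(2) obtain f where f: "f \<in> F" "(s f = y \<and> t f = z) \<or> (t f = y \<and> s f = z)"
    unfolding urel_def by blast
  have lw: "length ws = Suc (length ps)" using W(1) by (simp add: uwalk_def)
  show ?case
  proof (cases "z \<in> set ws")
    case True
    then obtain i where i: "i < length ws" "ws!i = z" by (auto simp: in_set_conv_nth)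
    have "uwalk s t F (take i ps) (take (Suc i) ws)"
      using W(1) i lw unfolding uwalk_def by (auto simp: min_def dest: in_set_takeD)
    moreover have "distinct (take (Suc i) ws)" using W(2) by simp
    moreover have "hd (take (Suc i) ws) = u" using W(3) by simp
    moreover have "last (take (Suc i) ws) = z" using i
      by (simp add: take_Suc_conv_app_nth)
    ultimately show ?thesis by blast
  next
    case False
    have ws0: "ws \<noteq> []" using lw by auto
    have lst: "ws ! length ps = y" using W(4) lw ws0 by (simp add: last_conv_nth)
    have "uwalk s t F (ps @ [f]) (ws @ [z])"
      using W(1) lw f lst unfolding uwalk_def
      by (auto simp: nth_append less_Suc_eq)
    moreover have "distinct (ws @ [z])" using W(2) False by simp
    moreover have "hd (ws @ [z]) = u" using W(3) ws0 by simp
    ultimately show ?thesis by fastforce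
  qed
qed

lemma walk_distinct_edges:
  assumes "uwalk s t F ps ws" "distinct ws"
  shows "distinct ps"
proof -
  have lw: "length ws = Suc (length ps)" using assms(1) by (simp add: uwalk_def)
  have E: "{s (ps!i), t (ps!i)} = {ws!i, ws!Suc i}" if "i < length ps" for i
    using assms(1) that unfolding uwalk_def by auto
  show ?thesis unfolding distinct_conv_nth
  proof (intro allI impI)
    fix i j assume ij: "i < length ps" "j < length ps" "i \<noteq> j"
    show "ps!i \<noteq> ps!j"
    proof
      assume eq: "ps!i = ps!j"
      have "{ws!i, ws!Suc i} = {ws!j, ws!Suc j}" using E[OF ij(1)] E[OF ij(2)] eq by simp
      hence "(ws!i = ws!j \<or> ws!i = ws!Suc j) \<and> (ws!Suc i = ws!j \<or> ws!Suc i = ws!Suc j)"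
        by (metis doubleton_eq_iff)
      moreover have "ws!a = ws!b \<longleftrightarrow> a = b" if "a < length ws" "b < length ws" for a b
        using assms(2) that by (simp add: nth_eq_iff_index_eq)
      ultimately show False using ij lw by auto
    qed
  qed
qed

lemma pigeon:
  assumes "inj_on s F" "set ps \<subseteq> F" "distinct ps" "s ` set ps \<subseteq> V" "finite V"
  shows "length ps \<le> card V"
proof -
  have "length ps = card (set ps)" using assms(3) by (simp add: distinct_card)
  also have "\<dots> = card (s ` set ps)" using assms(1,2) by (simp add: card_image inj_on_subset)
  also have "\<dots> \<le> card V" using assms(4,5) by (simp add: card_mono)
  finally show ?thesis .
qed


lemma trap_dcycle:
  assumes "finite F" "S \<noteq> {}" "\<forall>x\<in>S. \<exists>f\<in>F. s f = x \<and> t f \<in> S"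
  shows "\<exists>es. dcycle F s t es"
proof -
  obtain x0 where x0: "x0 \<in> S" using assms(2) by blast
  obtain g where g: "\<forall>x\<in>S. g x \<in> F \<and> s (g x) = x \<and> t (g x) \<in> S"
    using assms(3) by metis
  define h where "h x = t (g x)" for x
  define sq where "sq k = (h ^^ k) x0" for k
  have sqS: "sq k \<in> S" for k
    by (induction k) (auto simp: sq_def h_def x0 g)
  have sqSuc: "sq (Suc k) = h (sq k)" for k by (simp add: sq_def)
  define X where "X = insert x0 (t ` F)"
  have finX: "finite X" using assms(1) by (simp add: X_def)
  have sqX: "sq k \<in> X" for k
  proof (cases k)
    case (Suc j)
    have "g (sq j) \<in> F" using g sqS by blast
    thus ?thesis using Suc by (simp add: X_def sqSuc h_def)
  qed (simp add: X_def sq_def)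
  have "\<not> inj_on sq {..card X}"
  proof
    assume "inj_on sq {..card X}"
    hence "card (sq ` {..card X}) = Suc (card X)" by (simp add: card_image)
    moreover have "card (sq ` {..card X}) \<le> card X"
      using sqX finX by (intro card_mono) auto
    ultimately show False by simp
  qed
  then obtain a b where ab: "a \<noteq> b" "sq a = sq b" unfolding inj_on_def by blast
  define P where "P j \<longleftrightarrow> (\<exists>i<j. sq i = sq j)" for j
  have "\<exists>j. P j" using ab unfolding P_def by (metis linorder_neqE_nat)
  define j0 where "j0 = (LEAST j. P j)"
  have Pj0: "P j0" unfolding j0_def using \<open>\<exists>j. P j\<close> by (metis LeastI_ex)
  then obtain i0 where i0: "i0 < j0" "sq i0 = sq j0" unfolding P_def by blast
  have mini: "sq a \<noteq> sq b" if "a < b" "b < j0" for a b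
    using not_less_Least[OF that(2)[unfolded j0_def]] that(1) unfolding P_def by blast
  define L where "L = j0 - i0"
  define es where "es = map (\<lambda>k. g (sq (i0+k))) [0..<L]"
  have L0: "L > 0" using i0 by (simp add: L_def)
  have mapS: "map s es = map (\<lambda>k. sq (i0+k)) [0..<L]"
    unfolding es_def using g sqS by simp
  have "distinct (map s es)" unfolding mapS distinct_map
  proof
    show "inj_on (\<lambda>k. sq (i0 + k)) (set [0..<L])"
    proof (rule inj_onI)
      fix a b assume "a \<in> set [0..<L]" "b \<in> set [0..<L]" "sq (i0+a) = sq (i0+b)"
      thus "a = b" using mini[of "i0+a" "i0+b"] mini[of "i0+b" "i0+a"] unfolding L_def
        by (metis add_less_cancel_left atLeastLessThan_iff le_add_diff_inverse less_imp_le linorder_neqE_nat set_upt i0(1))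
    qed
  qed simp
  moreover have "es \<noteq> []" using L0 by (simp add: es_def)
  moreover have "set es \<subseteq> F" using g sqS by (auto simp: es_def)
  moreover have "\<forall>i<length es. t (es!i) = s (es!((i+1) mod length es))"
  proof (intro allI impI)
    fix k assume k: "k < length es"
    hence kL: "k < L" by (simp add: es_def)
    have te: "t (es!k) = sq (Suc (i0 + k))" using kL g sqS by (simp add: es_def sqSuc h_def)
    show "t (es!k) = s (es!((k+1) mod length es))"
    proof (cases "k+1 < L")
      case True
      thus ?thesis using te g sqS by (simp add: es_def)
    next
      case False
      hence "k+1 = L" using kL by simp
      hence "(k+1) mod length es = 0" by (simp add: es_def)
      moreover have "Suc (i0+k) = j0" using \<open>k+1 = L\<close> i0 by (simp add: L_def)
      ultimately show ?thesis using te g sqS i0 L0 by (simp add: es_def)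
    qed
  qed
  ultimately show ?thesis unfolding dcycle_def by blast
qed

lemma dcycle_ucycle:
  assumes "dcycle F s t es" shows "ucycle s t F es (map s es)"
  using assms unfolding dcycle_def ucycle_def by (auto simp: distinct_map)

lemma dcycle_mono: "dcycle F s t es \<Longrightarrow> F \<subseteq> E \<Longrightarrow> dcycle E s t es"
  unfolding dcycle_def by blast

lemma uacyclic_trapfree:
  assumes "finite F" "uacyclic s t F" shows "trapfree s t F"
  using assms trap_dcycle dcycle_ucycle unfolding trapfree_def uacyclic_def by metis


lemma reach_B:
  assumes ends: "\<forall>f\<in>F. s f \<in> N \<and> t f \<in> N"
    and P2: "\<forall>n\<in>N. (\<exists>f\<in>F. s f = n) \<longleftrightarrow> n \<notin> B"
    and tf: "trapfree s t F" and n: "n \<in> N"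
  shows "\<exists>b\<in>B. (n,b) \<in> uconn N s t F"
proof (rule ccontr)
  assume nb: "\<not> ?thesis"
  have eq: "equiv N (uconn N s t F)" by (rule uconn_equiv)
  define S where "S = {x\<in>N. \<forall>b\<in>B. (x,b) \<notin> uconn N s t F}"
  have "n \<in> S" using nb n by (auto simp: S_def)
  moreover have "\<forall>x\<in>S. \<exists>f\<in>F. s f = x \<and> t f \<in> S"
  proof
    fix x assume x: "x \<in> S"
    have "x \<notin> B" using x eq by (auto simp: S_def equiv_def refl_on_def)
    then obtain f where f: "f \<in> F" "s f = x" using P2 x by (auto simp: S_def)
    have "(x, t f) \<in> uconn N s t F" using edge_uconn[OF f(1)] ends f by auto
    hence "t f \<in> S" using x ends f(1) eq unfolding S_def equiv_def trans_def by blast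
    thus "\<exists>f\<in>F. s f = x \<and> t f \<in> S" using f by blast
  qed
  ultimately show False using tf unfolding trapfree_def by blast
qed

lemma amo_B:
  assumes inj: "inj_on s F" and ends: "\<forall>f\<in>F. s f \<in> N \<and> t f \<in> N"
    and P2: "\<forall>n\<in>N. (\<exists>f\<in>F. s f = n) \<longleftrightarrow> n \<notin> B"
    and b: "b1 \<in> B" "b2 \<in> B" and c: "(b1,b2) \<in> uconn N s t F"
  shows "b1 = b2"
proof (rule ccontr)
  assume ne: "b1 \<noteq> b2"
  have "(b1,b2) \<in> (urel s t F)\<^sup>*" using c by (simp add: uconn_urel)
  then obtain ps ws where W: "uwalk s t F ps ws" "distinct ws" "hd ws = b1" "last ws = b2"
    using walk_exists by blast
  have lw: "length ws = Suc (length ps)" using W(1) by (simp add: uwalk_def)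
  have ws0: "ws \<noteq> []" using lw by auto
  have inws: "b1 \<in> set ws" "b2 \<in> set ws" using W ws0 by auto
  have ps0: "ps \<noteq> []"
  proof
    assume "ps = []"
    then obtain x where "ws = [x]" using lw by (auto simp: length_Suc_conv)
    thus False using W ne by simp
  qed
  have sub: "s ` set ps \<subseteq> set ws - {b1,b2}"
  proof
    fix x assume "x \<in> s ` set ps"
    then obtain i where i: "i < length ps" "x = s (ps!i)" by (auto simp: in_set_conv_nth)
    have "x = ws!i \<or> x = ws!Suc i" using W(1) i unfolding uwalk_def by auto
    hence "x \<in> set ws" using i lw by auto
    moreover have "ps!i \<in> F" using W(1) i unfolding uwalk_def by auto
    hence "x \<notin> B" using P2 ends i by blast
    ultimately show "x \<in> set ws - {b1,b2}" using b by auto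
  qed
  have "length ps \<le> card (set ws - {b1,b2})"
    using pigeon[OF inj _ walk_distinct_edges[OF W(1,2)] sub] W(1) unfolding uwalk_def by simp
  also have "\<dots> = card (set ws) - 2" using inws ne by (simp add: card_Diff_subset)
  also have "\<dots> = length ps - 1" using W(2) lw by (simp add: distinct_card)
  finally show False using ps0 by (cases ps) auto
qed

lemma inj_trapfree_uacyclic:
  assumes inj: "inj_on s F" and tf: "trapfree s t F"
  shows "uacyclic s t F"
  unfolding uacyclic_def
proof
  assume "\<exists>es vs. ucycle s t F es vs"
  then obtain es vs where C: "ucycle s t F es vs" by blast
  let ?n = "length es"
  note Cu = C[unfolded ucycle_def]
  note C' = conjunct1[OF Cu] conjunct1[OF conjunct2[OF Cu]] conjunct1[OF conjunct2[OF conjunct2[OF Cu]]]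
    conjunct1[OF conjunct2[OF conjunct2[OF conjunct2[OF Cu]]]]
    conjunct1[OF conjunct2[OF conjunct2[OF conjunct2[OF conjunct2[OF Cu]]]]]
  note ori = conjunct2[OF conjunct2[OF conjunct2[OF conjunct2[OF conjunct2[OF Cu]]]]]
  have ends: "s f \<in> set vs \<and> t f \<in> set vs" if "f \<in> set es" for f
  proof -
    have "\<exists>i<?n. es!i = f" using that by (simp only: in_set_conv_nth)
    then obtain i where i: "i < ?n" "es!i = f" by blast
    have m: "(i+1) mod ?n < ?n" using C'(1) by simp
    have v1: "vs!i \<in> set vs" using i(1) C'(2) by simp
    have v2: "vs!((i+1) mod ?n) \<in> set vs" using m C'(2) by simp
    have o: "(s f = vs!i \<and> t f = vs!((i+1) mod ?n)) \<or> (t f = vs!i \<and> s f = vs!((i+1) mod ?n))"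
      using ori[rule_format, OF i(1)] unfolding i(2) .
    show ?thesis using o v1 v2 by auto
  qed
  have sub: "s ` set es \<subseteq> set vs" using ends by blast
  have "card (s ` set es) = card (set es)" by (rule card_image[OF inj_on_subset[OF inj C'(5)]])
  also have "\<dots> = length es" by (rule distinct_card[OF C'(3)])
  also have "\<dots> = length vs" using C'(2) by simp
  also have "\<dots> = card (set vs)" by (rule distinct_card[OF C'(4), symmetric])
  finally have eq: "s ` set es = set vs" by (rule card_subset_eq[OF finite_set sub])
  have ne: "set vs \<noteq> {}" using C'(1,2) by auto
  have tr: "\<forall>x\<in>set vs. \<exists>f\<in>F. s f = x \<and> t f \<in> set vs"
  proof
    fix x assume "x \<in> set vs"
    then obtain f where f: "f \<in> set es" "x = s f" using eq by blast
    show "\<exists>f\<in>F. s f = x \<and> t f \<in> set vs" using f ends[OF f(1)] C'(5) by blast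
  qed
  have "\<exists>S. S \<noteq> {} \<and> (\<forall>x\<in>S. \<exists>f\<in>F. s f = x \<and> t f \<in> S)" using ne tr by blast
  thus False using tf unfolding trapfree_def by (rule notE[rotated])
qed

lemma char_B:
  assumes ends: "\<forall>f\<in>F. s f \<in> {1..m+1} \<and> t f \<in> {1..m+1}" and FE: "F \<subseteq> E"
    and inj: "inj_on s F" and P2: "\<forall>n\<in>{1..m+1}. (\<exists>f\<in>F. s f = n) \<longleftrightarrow> n \<notin> B"
    and tf: "trapfree s t F" and BN: "B \<subseteq> {1..m+1}"
  shows "F \<in> Theta m E s t B"
proof -
  let ?N = "{1..m+1}" let ?R = "uconn ?N s t F"
  have eq: "equiv ?N ?R" by (rule uconn_equiv)
  have rB: "\<exists>b\<in>B. (n,b) \<in> ?R" if "n \<in> ?N" for n using reach_B[OF ends P2 tf that] .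
  have aB: "b1 = b2" if "b1 \<in> B" "b2 \<in> B" "(b1,b2) \<in> ?R" for b1 b2 using amo_B[OF inj ends P2 that] .
  have bij: "bij_betw (\<lambda>b. ?R``{b}) B (components ?N s t F)"
    unfolding bij_betw_def components_def
  proof
    show "inj_on (\<lambda>b. ?R``{b}) B"
    proof (rule inj_onI)
      fix b1 b2 assume "b1 \<in> B" "b2 \<in> B" "?R``{b1} = ?R``{b2}"
      thus "b1 = b2" using aB equiv_class_eq_iff[OF eq] BN by blast
    qed
    show "(\<lambda>b. ?R``{b}) ` B = ?N // ?R"
    proof
      show "(\<lambda>b. ?R``{b}) ` B \<subseteq> ?N // ?R" using BN by (auto intro: quotientI)
      show "?N // ?R \<subseteq> (\<lambda>b. ?R``{b}) ` B"
      proof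
        fix C assume "C \<in> ?N // ?R"
        then obtain n where n: "n \<in> ?N" "C = ?R``{n}" by (auto elim: quotientE)
        then obtain b where b: "b \<in> B" "(n,b) \<in> ?R" using rB by blast
        have "C = ?R``{b}" using n b equiv_class_eq_iff[OF eq] by blast
        thus "C \<in> (\<lambda>b. ?R``{b}) ` B" using b by blast
      qed
    qed
  qed
  have card: "card (components ?N s t F) = card B" using bij_betw_same_card[OF bij] by simp
  have root: "\<forall>C\<in>components ?N s t F. \<exists>r\<in>B \<inter> C. \<forall>n\<in>C. (\<nexists>e. e \<in> F \<and> s e = n) \<longleftrightarrow> n = r"
  proof
    fix C assume "C \<in> components ?N s t F"
    then obtain n where n: "n \<in> ?N" "C = ?R``{n}" unfolding components_def by (auto elim: quotientE)
    then obtain b where b: "b \<in> B" "(n,b) \<in> ?R" using rB by blast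
    have bC: "b \<in> C" using n b by simp
    have "\<forall>x\<in>C. (\<nexists>e. e \<in> F \<and> s e = x) \<longleftrightarrow> x = b"
    proof
      fix x assume x: "x \<in> C"
      hence xn: "(n,x) \<in> ?R" using n by simp
      hence xN: "x \<in> ?N" using eq by (auto simp: equiv_def)
      have xb: "(x,b) \<in> ?R" using xn b eq unfolding equiv_def sym_def trans_def by blast
      show "(\<nexists>e. e \<in> F \<and> s e = x) \<longleftrightarrow> x = b"
      proof
        assume "\<nexists>e. e \<in> F \<and> s e = x" hence "x \<in> B" using P2 xN by blast
        thus "x = b" using aB b xb by blast
      next
        assume "x = b" thus "\<nexists>e. e \<in> F \<and> s e = x" using P2 b BN by blast
      qed
    qed
    thus "\<exists>r\<in>B \<inter> C. \<forall>n\<in>C. (\<nexists>e. e \<in> F \<and> s e = n) \<longleftrightarrow> n = r" using b bC by blast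
  qed
  show ?thesis unfolding Theta_def using FE inj_trapfree_uacyclic[OF inj tf] card root by blast
qed


lemma trapfree_mono: assumes "F0 \<subseteq> F" "trapfree s t F" shows "trapfree s t F0"
  unfolding trapfree_def
proof
  assume "\<exists>S. S \<noteq> {} \<and> (\<forall>x\<in>S. \<exists>f\<in>F0. s f = x \<and> t f \<in> S)"
  then obtain S where S: "S \<noteq> {}" "\<forall>x\<in>S. \<exists>f\<in>F0. s f = x \<and> t f \<in> S" by blast
  have "\<forall>x\<in>S. \<exists>f\<in>F. s f = x \<and> t f \<in> S" using S(2) assms(1) by blast
  hence "\<exists>S. S \<noteq> {} \<and> (\<forall>x\<in>S. \<exists>f\<in>F. s f = x \<and> t f \<in> S)" using S(1) by blast
  thus False using assms(2) unfolding trapfree_def by simp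
qed

lemma char_C:
  assumes mg: "multidigraph m E s t" and BN: "B \<subseteq> {1..m+1}" and F: "F \<in> Theta m E s t B"
  shows "inj_on s F" "\<forall>n\<in>{1..m+1}. (\<exists>f\<in>F. s f = n) \<longleftrightarrow> n \<notin> B" "trapfree s t F"
proof -
  let ?N = "{1..m+1}" let ?R = "uconn ?N s t F"
  have FE: "F \<subseteq> E" and ua: "uacyclic s t F" and card: "card (components ?N s t F) = card B"
    and root: "\<forall>C\<in>components ?N s t F. \<exists>r\<in>B \<inter> C. \<forall>n\<in>C. (\<nexists>e. e \<in> F \<and> s e = n) \<longleftrightarrow> n = r"
    using F unfolding Theta_def by auto
  have finE: "finite E" and ends: "\<forall>f\<in>F. s f \<in> ?N \<and> t f \<in> ?N" and loop: "\<forall>f\<in>F. s f \<noteq> t f"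
    using mg FE unfolding multidigraph_def by auto
  have finF: "finite F" using finE FE finite_subset by blast
  show tf: "trapfree s t F" using uacyclic_trapfree[OF finF ua] .
  have eq: "equiv ?N ?R" by (rule uconn_equiv)
  have finB: "finite B" using BN finite_subset by blast
  have img: "(\<lambda>b. ?R``{b}) ` B = components ?N s t F"
  proof
    show "(\<lambda>b. ?R``{b}) ` B \<subseteq> components ?N s t F"
      using BN unfolding components_def by (auto intro: quotientI)
    show "components ?N s t F \<subseteq> (\<lambda>b. ?R``{b}) ` B"
    proof
      fix C assume C: "C \<in> components ?N s t F"
      then obtain n where n: "n \<in> ?N" "C = ?R``{n}" unfolding components_def by (auto elim: quotientE)
      obtain r where r: "r \<in> B" "r \<in> C" using root C by blast
      have "(n,r) \<in> ?R" using r n by simp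
      hence "C = ?R``{r}" using n equiv_class_eq_iff[OF eq] by blast
      thus "C \<in> (\<lambda>b. ?R``{b}) ` B" using r by blast
    qed
  qed
  have inj: "inj_on (\<lambda>b. ?R``{b}) B" by (rule eq_card_imp_inj_on[OF finB]) (simp only: img card)
  have aB: "b1 = b2" if "b1 \<in> B" "b2 \<in> B" "(b1,b2) \<in> ?R" for b1 b2
    using inj that equiv_class_eq_iff[OF eq] unfolding inj_on_def by blast
  show P2: "\<forall>n\<in>?N. (\<exists>f\<in>F. s f = n) \<longleftrightarrow> n \<notin> B"
  proof
    fix n assume n: "n \<in> ?N"
    have Cn: "?R``{n} \<in> components ?N s t F" using n unfolding components_def by (rule quotientI)
    obtain r where r0: "r \<in> B \<inter> ?R``{n}"
      and rt: "\<forall>x\<in>?R``{n}. (\<nexists>e. e \<in> F \<and> s e = x) \<longleftrightarrow> x = r"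
      using bspec[OF root Cn] by (rule bexE)
    have r: "r \<in> B" "r \<in> ?R``{n}" using r0 by auto
    have nn: "n \<in> ?R``{n}" using equiv_class_self[OF eq n] .
    have nr: "(n,r) \<in> ?R" using r by simp
    show "(\<exists>f\<in>F. s f = n) \<longleftrightarrow> n \<notin> B"
    proof
      assume "\<exists>f\<in>F. s f = n" hence "n \<noteq> r" using rt nn by blast
      thus "n \<notin> B" using aB[of n r] r(1) nr by blast
    next
      assume "n \<notin> B" hence "n \<noteq> r" using r by blast
      thus "\<exists>f\<in>F. s f = n" using rt nn by blast
    qed
  qed
  show "inj_on s F"
  proof (rule inj_onI, rule ccontr)
    fix a b assume ab: "a \<in> F" "b \<in> F" "s a = s b" "a \<noteq> b"
    define n where "n = s a"
    have nN: "n \<in> ?N" using ends ab by (simp add: n_def)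
    define g where "g x = (SOME f. f \<in> F \<and> s f = x)" for x
    have g: "g x \<in> F \<and> s (g x) = x" if "x \<in> ?N" "x \<notin> B" for x
    proof -
      have "\<exists>f. f \<in> F \<and> s f = x" using P2 that by blast
      thus ?thesis unfolding g_def by (rule someI_ex)
    qed
    define F0 where "F0 = g ` (?N - B)"
    have F0F: "F0 \<subseteq> F" using g by (auto simp: F0_def)
    have "\<exists>f\<in>F. s f = n" using ab(1) n_def by blast
    hence nB: "n \<notin> B" using P2 nN by blast
    obtain c where c: "c \<in> F" "s c = n" "c \<notin> F0"
    proof -
      have "\<exists>c\<in>{a,b}. c \<noteq> g n" using ab(4) by (cases "a = g n") auto
      then obtain c where c: "c \<in> {a,b}" "c \<noteq> g n" by blast
      have "c \<notin> F0"
      proof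
        assume "c \<in> F0" then obtain x where x: "x \<in> ?N - B" "c = g x" by (auto simp: F0_def)
        hence "s c = x" using g by auto
        moreover have "s c = n" using c ab n_def by auto
        ultimately show False using c x by auto
      qed
      moreover have "c \<in> F" "s c = n" using c ab(1,2,3) n_def by auto
      ultimately show ?thesis by (rule that[rotated 2])
    qed
    have inj0: "inj_on s F0"
    proof (rule inj_onI)
      fix x y assume xy: "x \<in> F0" "y \<in> F0" "s x = s y"
      obtain x' where x': "x' \<in> ?N - B" "x = g x'" using xy(1) by (auto simp: F0_def)
      obtain y' where y': "y' \<in> ?N - B" "y = g y'" using xy(2) by (auto simp: F0_def)
      have "x' = y'" using g[of x'] g[of y'] x' y' xy(3) by auto
      thus "x = y" using x' y' by simp
    qed
    have ends0: "\<forall>f\<in>F0. s f \<in> ?N \<and> t f \<in> ?N" using ends F0F by blast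
    have P20: "\<forall>x\<in>?N. (\<exists>f\<in>F0. s f = x) \<longleftrightarrow> x \<notin> B"
    proof
      fix x assume x: "x \<in> ?N"
      show "(\<exists>f\<in>F0. s f = x) \<longleftrightarrow> x \<notin> B"
      proof
        assume "\<exists>f\<in>F0. s f = x"
        then obtain y where "y \<in> ?N - B" "s (g y) = x" by (auto simp: F0_def)
        thus "x \<notin> B" using g by auto
      next
        assume "x \<notin> B" thus "\<exists>f\<in>F0. s f = x" using g x by (auto simp: F0_def)
      qed
    qed
    have tf0: "trapfree s t F0" using trapfree_mono[OF F0F tf] .
    obtain \<beta>1 where \<beta>1: "\<beta>1 \<in> B" "(n,\<beta>1) \<in> uconn ?N s t F0"
      using reach_B[OF ends0 P20 tf0 nN] by blast
    have tcN: "t c \<in> ?N" using ends c by blast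
    obtain \<beta>2 where \<beta>2: "\<beta>2 \<in> B" "(t c,\<beta>2) \<in> uconn ?N s t F0"
      using reach_B[OF ends0 P20 tf0 tcN] by blast
    have mono: "uconn ?N s t F0 \<subseteq> ?R" using uconn_mono[OF F0F] .
    have "(n, t c) \<in> ?R" using edge_uconn[OF c(1)] c ends by auto
    moreover have "(n,\<beta>1) \<in> ?R" "(t c,\<beta>2) \<in> ?R" using \<beta>1 \<beta>2 mono by auto
    ultimately have "(\<beta>1, \<beta>2) \<in> ?R" by (meson uconn_sym uconn_trans)
    hence "\<beta>1 = \<beta>2" using aB \<beta>1 \<beta>2 by blast
    hence "(t c, n) \<in> uconn ?N s t F0"
      using \<beta>1(2) \<beta>2(2) by (meson uconn_sym uconn_trans)
    hence "(t c, n) \<in> (urel s t F0)\<^sup>*" by (simp add: uconn_urel)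
    then obtain ps ws where W: "uwalk s t F0 ps ws" "distinct ws" "hd ws = t c" "last ws = n"
      using walk_exists by blast
    have dps: "distinct ps" using walk_distinct_edges W by blast
    have lw: "length ws = Suc (length ps)" and sps: "set ps \<subseteq> F0"
      and ori: "\<forall>i<length ps. (s (ps!i) = ws!i \<and> t (ps!i) = ws!Suc i) \<or> (t (ps!i) = ws!i \<and> s (ps!i) = ws!Suc i)"
      using W(1) unfolding uwalk_def by auto
    have ws0: "ws \<noteq> []" using lw by auto
    have wl: "ws ! length ps = n" using W(4) lw ws0 by (simp add: last_conv_nth)
    have wh: "ws ! 0 = t c" using W(3) ws0 by (simp add: hd_conv_nth)
    have "ucycle s t F (ps @ [c]) ws"
      unfolding ucycle_def
    proof (intro conjI allI impI)
      show "ps @ [c] \<noteq> []" by simp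
      show "length ws = length (ps @ [c])" using lw by simp
      have "c \<notin> set ps" using sps c(3) by blast
      thus "distinct (ps @ [c])" using dps by simp
      show "distinct ws" using W(2) .
      show "set (ps @ [c]) \<subseteq> F" using sps F0F c(1) by auto
      fix i assume i: "i < length (ps @ [c])"
      show "s ((ps @ [c]) ! i) = ws ! i \<and> t ((ps @ [c]) ! i) = ws ! ((i + 1) mod length (ps @ [c])) \<or>
         t ((ps @ [c]) ! i) = ws ! i \<and> s ((ps @ [c]) ! i) = ws ! ((i + 1) mod length (ps @ [c]))"
      proof (cases "i < length ps")
        case True
        have e1: "(ps @ [c]) ! i = ps ! i" using True by (simp add: nth_append)
        have e2: "(i + 1) mod length (ps @ [c]) = Suc i" using True by simp
        show ?thesis unfolding e1 e2 using ori[rule_format, OF True] .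
      next
        case False
        hence ip: "i = length ps" using i by simp
        have e1: "(ps @ [c]) ! i = c" using ip by simp
        have e2: "(i + 1) mod length (ps @ [c]) = 0" using ip by simp
        show ?thesis unfolding e1 e2 using wl wh c(2) ip by simp
      qed
    qed
    hence "\<exists>es vs. ucycle s t F es vs" by (intro exI)
    thus False using ua unfolding uacyclic_def by (rule notE[rotated])
  qed
qed

theorem lemma3p4:
  fixes m :: nat and E :: "'e set" and s t :: "'e \<Rightarrow> nat"
    and \<pi> :: "'e \<Rightarrow> 'r::ordered_ring" and \<mu> :: "'e \<Rightarrow> 'e set"
    and B :: "nat set" and \<zeta> :: "'e set" and e e' :: 'e
  assumes "edge_partition m E s t \<pi> \<mu>"
    and "B \<subseteq> {1..m+1}"
    and "\<zeta> \<in> Theta m E s t B"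
    and "e \<in> \<zeta> \<inter> Eneg E \<pi>"
    and "e' \<in> \<mu> e"
  shows "(\<zeta> - {e}) \<union> {e'} \<in> Theta m E s t B"
proof -
  let ?N = "{1..m+1}"
  let ?F = "(\<zeta> - {e}) \<union> {e'}"
  note EPall = assms(1)[unfolded edge_partition_def]
  have mg: "multidigraph m E s t" using EPall by (rule conjunct1)
  have eN: "e \<in> Eneg E \<pi>" and e\<zeta>: "e \<in> \<zeta>" using assms(4) by auto
  note EP = conjunct2[OF conjunct2[OF conjunct2[OF conjunct2[OF EPall]]]]
  note EPa = bspec[OF EP eN]
  note EPe = conjunct1[OF EPa] conjunct1[OF conjunct2[OF EPa]] conjunct1[OF conjunct2[OF conjunct2[OF EPa]]]
  have e'E: "e' \<in> E" using EPe(1) assms(5) unfolding Epos_def by blast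
  have se': "s e' = s e" using EPe(2) assms(5) by blast
  have cyc: "\<forall>es. dcycle E s t es \<and> e' \<in> set es \<longrightarrow> t e \<in> s ` set es"
    using EPe(3) assms(5) by (rule bspec)
  have inj: "inj_on s \<zeta>" and P2: "\<forall>n\<in>?N. (\<exists>f\<in>\<zeta>. s f = n) \<longleftrightarrow> n \<notin> B"
    and tf: "trapfree s t \<zeta>" using char_C[OF mg assms(2,3)] by auto
  have \<zeta>E: "\<zeta> \<subseteq> E" using assms(3) unfolding Theta_def by auto
  have FE: "?F \<subseteq> E" using \<zeta>E e'E by auto
  have finE: "finite E" using mg unfolding multidigraph_def by blast
  have ends: "\<forall>f\<in>?F. s f \<in> ?N \<and> t f \<in> ?N" using mg FE unfolding multidigraph_def by blast
  have injF: "inj_on s ?F"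
  proof (rule inj_onI)
    fix x y assume xy: "x \<in> ?F" "y \<in> ?F" "s x = s y"
    have xz: "x \<in> \<zeta>" "x \<noteq> e" if "x \<noteq> e'" using xy(1) that by auto
    have yz: "y \<in> \<zeta>" "y \<noteq> e" if "y \<noteq> e'" using xy(2) that by auto
    show "x = y"
    proof (cases "x = e'")
      case True
      show ?thesis
      proof (rule ccontr)
        assume "x \<noteq> y" hence "y \<noteq> e'" using True by simp
        hence "s y = s e" using xy(3) True se' by simp
        hence "y = e" using inj_onD[OF inj _ yz(1) e\<zeta>] \<open>y \<noteq> e'\<close> by blast
        thus False using yz(2) \<open>y \<noteq> e'\<close> by blast
      qed
    next
      case False
      show ?thesis
      proof (cases "y = e'")
        case True
        have "s x = s e" using xy(3) True se' by simp
        hence "x = e" using inj_onD[OF inj _ xz(1) e\<zeta>] False by blast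
        thus ?thesis using xz(2) False by blast
      next
        case F2: False
        show ?thesis using inj_onD[OF inj xy(3) xz(1)[OF False] yz(1)[OF F2]] .
      qed
    qed
  qed
  have P2F: "\<forall>n\<in>?N. (\<exists>f\<in>?F. s f = n) \<longleftrightarrow> n \<notin> B"
  proof -
    have "(\<exists>f\<in>?F. s f = n) \<longleftrightarrow> (\<exists>f\<in>\<zeta>. s f = n)" for n
    proof
      assume "\<exists>f\<in>?F. s f = n" then obtain f where "f\<in>?F" "s f = n" by blast
      thus "\<exists>f\<in>\<zeta>. s f = n" using e\<zeta> se' by (cases "f = e'") auto
    next
      assume "\<exists>f\<in>\<zeta>. s f = n" then obtain f where "f\<in>\<zeta>" "s f = n" by blast
      thus "\<exists>f\<in>?F. s f = n" using se' by (cases "f = e") auto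
    qed
    thus ?thesis using P2 by simp
  qed
  have tfF: "trapfree s t ?F"
    unfolding trapfree_def
  proof
    assume "\<exists>S. S \<noteq> {} \<and> (\<forall>x\<in>S. \<exists>f\<in>?F. s f = x \<and> t f \<in> S)"
    then obtain S where S: "S \<noteq> {}" "\<forall>x\<in>S. \<exists>f\<in>?F. s f = x \<and> t f \<in> S" by blast
    have finF: "finite ?F" using FE finE finite_subset by blast
    obtain es where D: "dcycle ?F s t es" using trap_dcycle[OF finF S] by blast
    define S2 where "S2 = s ` set es"
    have D': "es \<noteq> []" "set es \<subseteq> ?F" "\<forall>i<length es. t (es!i) = s (es!((i+1) mod length es))"
      using D unfolding dcycle_def by auto
    have tes: "t f \<in> S2" if "f \<in> set es" for f
    proof -
      have "\<exists>i<length es. es!i = f" using that by (simp only: in_set_conv_nth)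
      then obtain i where i: "i < length es" "f = es!i" by metis
      have "(i+1) mod length es < length es" using D'(1) by simp
      thus ?thesis using D'(3) i unfolding S2_def by auto
    qed
    have "S2 \<noteq> {}" using D'(1) by (simp add: S2_def)
    moreover have "\<forall>x\<in>S2. \<exists>f\<in>\<zeta>. s f = x \<and> t f \<in> S2"
    proof
      fix x assume "x \<in> S2"
      then obtain f where f: "f \<in> set es" "x = s f" by (auto simp: S2_def)
      show "\<exists>f\<in>\<zeta>. s f = x \<and> t f \<in> S2"
      proof (cases "f = e'")
        case True
        have "dcycle E s t es" using dcycle_mono[OF D FE] .
        hence "t e \<in> S2" using cyc f True by (auto simp: S2_def)
        thus ?thesis using e\<zeta> f True se' by auto
      next
        case False
        hence "f \<in> \<zeta>" using f D'(2) by auto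
        thus ?thesis using f tes by auto
      qed
    qed
    ultimately show False using tf unfolding trapfree_def by blast
  qed
  show ?thesis using char_B[OF ends FE injF P2F tfF assms(2)] .
qed

end
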